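(* Let $G$ be a graph with at least one cut-vertex. Let $\beta$ be the number of vertices of a largest block of $G$ and $\tilde{\Delta}$ the maximum degree of a cut-vertex of $G$ in its block-cutpoint graph. Then $\Gamma(G)\le(\beta-1)\tilde{\Delta}+1$.
   Context: A Grundy-coloring of $G$ is a proper coloring with nonempty color classes $C_1,\ldots,C_k$ such that for $i<j$ each vertex of $C_j$ has a neighbor in $C_i$; $\Gamma(G)$ is the maximum number of colors of a Grundy-coloring. A cut-vertex is a vertex whose removal increases the number of connected components. A block is a maximal 2-connected subgraph or a bridge (as a $K_2$). The block-cutpoint graph is the bipartite graph whose parts are the cut-vertices and the blocks of $G$, a cut-vertex $v$ being adjacent to a block $B$ iff $v\in B$. *)

theory Defs
  imports Main
begin

definition graph :: "'a set \<Rightarrow> ('a \<Rightarrow> 'a \<Rightarrow> bool) \<Rightarrow> bool" where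
  "graph V E \<longleftrightarrow> finite V \<and> (\<forall>u v. E u v \<longrightarrow> u \<in> V \<and> v \<in> V)
     \<and> (\<forall>u v. E u v \<longrightarrow> E v u) \<and> (\<forall>v. \<not> E v v)"

definition reach_in :: "('a \<Rightarrow> 'a \<Rightarrow> bool) \<Rightarrow> 'a set \<Rightarrow> 'a \<Rightarrow> 'a \<Rightarrow> bool" where
  "reach_in E S x y \<longleftrightarrow> x \<in> S \<and> y \<in> S \<and> (\<lambda>u v. E u v \<and> u \<in> S \<and> v \<in> S)\<^sup>*\<^sup>* x y"

definition components :: "('a \<Rightarrow> 'a \<Rightarrow> bool) \<Rightarrow> 'a set \<Rightarrow> 'a set set" where
  "components E S = {{y. reach_in E S x y} | x. x \<in> S}"

definition cut_vertex :: "'a set \<Rightarrow> ('a \<Rightarrow> 'a \<Rightarrow> bool) \<Rightarrow> 'a \<Rightarrow> bool" where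
  "cut_vertex V E v \<longleftrightarrow> v \<in> V \<and> card (components E (V - {v})) > card (components E V)"

definition connected_in :: "('a \<Rightarrow> 'a \<Rightarrow> bool) \<Rightarrow> 'a set \<Rightarrow> bool" where
  "connected_in E S \<longleftrightarrow> S \<noteq> {} \<and> (\<forall>x\<in>S. \<forall>y\<in>S. reach_in E S x y)"

text \<open>Vertex sets inducing a 2-connected subgraph, or a K2 (an edge).
  Blocks are the maximal such sets: maximal 2-connected subgraphs, or bridges.\<close>
definition nonsep :: "'a set \<Rightarrow> ('a \<Rightarrow> 'a \<Rightarrow> bool) \<Rightarrow> 'a set \<Rightarrow> bool" where
  "nonsep V E S \<longleftrightarrow> S \<subseteq> V \<and> card S \<ge> 2 \<and> connected_in E S
     \<and> (\<forall>v\<in>S. connected_in E (S - {v}))"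

definition is_block :: "'a set \<Rightarrow> ('a \<Rightarrow> 'a \<Rightarrow> bool) \<Rightarrow> 'a set \<Rightarrow> bool" where
  "is_block V E B \<longleftrightarrow> nonsep V E B \<and> (\<forall>S. nonsep V E S \<and> B \<subseteq> S \<longrightarrow> S = B)"

text \<open>Degree of a cut-vertex v in the block-cutpoint graph: number of blocks containing v.\<close>
definition bc_degree :: "'a set \<Rightarrow> ('a \<Rightarrow> 'a \<Rightarrow> bool) \<Rightarrow> 'a \<Rightarrow> nat" where
  "bc_degree V E v = card {B. is_block V E B \<and> v \<in> B}"

definition max_block_size :: "'a set \<Rightarrow> ('a \<Rightarrow> 'a \<Rightarrow> bool) \<Rightarrow> nat" where
  "max_block_size V E = Max {card B | B. is_block V E B}"

definition max_cut_bc_degree :: "'a set \<Rightarrow> ('a \<Rightarrow> 'a \<Rightarrow> bool) \<Rightarrow> nat" where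
  "max_cut_bc_degree V E = Max {bc_degree V E v | v. cut_vertex V E v}"

definition grundy_coloring :: "'a set \<Rightarrow> ('a \<Rightarrow> 'a \<Rightarrow> bool) \<Rightarrow> ('a \<Rightarrow> nat) \<Rightarrow> nat \<Rightarrow> bool" where
  "grundy_coloring V E c k \<longleftrightarrow>
     (\<forall>v\<in>V. c v \<in> {1..k})
   \<and> (\<forall>u\<in>V. \<forall>v\<in>V. E u v \<longrightarrow> c u \<noteq> c v)
   \<and> (\<forall>i\<in>{1..k}. \<exists>v\<in>V. c v = i)
   \<and> (\<forall>v\<in>V. \<forall>i. 1 \<le> i \<and> i < c v \<longrightarrow> (\<exists>u\<in>V. E v u \<and> c u = i))"

definition grundy_number :: "'a set \<Rightarrow> ('a \<Rightarrow> 'a \<Rightarrow> bool) \<Rightarrow> nat" where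
  "grundy_number V E = Max {k. \<exists>c. grundy_coloring V E c k}"

end

theory Submission
  imports Defs
begin


lemma reach_refl: "x \<in> S \<Longrightarrow> reach_in E S x x"
  by (simp add: reach_in_def)

lemma reach_edge: "E x y \<Longrightarrow> x \<in> S \<Longrightarrow> y \<in> S \<Longrightarrow> reach_in E S x y"
  by (auto simp: reach_in_def)

lemma reach_trans: "reach_in E S x y \<Longrightarrow> reach_in E S y z \<Longrightarrow> reach_in E S x z"
  by (auto simp: reach_in_def)

lemma reach_mono: assumes "reach_in E S x y" "S \<subseteq> T" shows "reach_in E T x y"
proof -
  have "(\<lambda>u v. E u v \<and> u \<in> S \<and> v \<in> S)\<^sup>*\<^sup>* x y" using assms by (simp add: reach_in_def)
  then have "(\<lambda>u v. E u v \<and> u \<in> T \<and> v \<in> T)\<^sup>*\<^sup>* x y"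
    by (rule rtranclp_mono[THEN predicate2D, rotated]) (use assms(2) in auto)
  then show ?thesis using assms by (auto simp: reach_in_def)
qed

lemma reach_sym: assumes "\<forall>u v. E u v \<longrightarrow> E v u" "reach_in E S x y" shows "reach_in E S y x"
proof -
  have "(\<lambda>u v. E u v \<and> u \<in> S \<and> v \<in> S)\<^sup>*\<^sup>* x y" using assms by (simp add: reach_in_def)
  then have "(\<lambda>u v. E u v \<and> u \<in> S \<and> v \<in> S)\<^sup>*\<^sup>* y x"
  proof (induction rule: rtranclp_induct)
    case base then show ?case by simp
  next
    case (step y z) then show ?case
      using assms(1) by (metis (mono_tags, lifting) converse_rtranclp_into_rtranclp)
  qed
  then show ?thesis using assms by (auto simp: reach_in_def)
qed

lemma conn_single: "connected_in E {x}"
  by (simp add: connected_in_def reach_refl)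

lemma conn_union: assumes "connected_in E S" "connected_in E T" "z \<in> S" "z \<in> T"
  and sym: "\<forall>u v. E u v \<longrightarrow> E v u"
  shows "connected_in E (S \<union> T)"
  unfolding connected_in_def
proof (intro conjI ballI)
  show "S \<union> T \<noteq> {}" using assms(3) by auto
  have r: "reach_in E (S \<union> T) w z" if "w \<in> S \<union> T" for w
  proof (cases "w \<in> S")
    case True
    then have "reach_in E S w z" using assms(1,3) unfolding connected_in_def by blast
    then show ?thesis by (rule reach_mono) auto
  next
    case False
    then have "w \<in> T" using that by simp
    then have "reach_in E T w z" using assms(2,4) unfolding connected_in_def by blast
    then show ?thesis by (rule reach_mono) auto
  qed
  fix x y assume x: "x \<in> S \<union> T" and y: "y \<in> S \<union> T"
  have "reach_in E (S \<union> T) z y" using reach_sym[OF sym r[OF y]] .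
  with r[OF x] show "reach_in E (S \<union> T) x y" by (rule reach_trans)
qed

lemma conn_edge: assumes "E s t" and sym: "\<forall>u v. E u v \<longrightarrow> E v u"
  shows "connected_in E {s, t}"
proof -
  have st: "reach_in E {s, t} s t" using assms(1) by (intro reach_edge) auto
  have ts: "reach_in E {s, t} t s" using reach_sym[OF sym st] .
  have ss: "reach_in E {s, t} s s" "reach_in E {s, t} t t" by (auto intro: reach_refl)
  show ?thesis unfolding connected_in_def using st ts ss by blast
qed

lemma conn_union_edge: assumes "connected_in E S" "connected_in E T" "s \<in> S" "t \<in> T" "E s t"
  and sym: "\<forall>u v. E u v \<longrightarrow> E v u"
  shows "connected_in E (S \<union> T)"
proof -
  have c1: "connected_in E (S \<union> {s, t})"
    by (rule conn_union[OF assms(1) conn_edge[OF assms(5) sym] assms(3) _ sym]) simp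
  have c2: "connected_in E ((S \<union> {s, t}) \<union> T)"
    by (rule conn_union[OF c1 assms(2) _ assms(4) sym]) simp
  have "(S \<union> {s, t}) \<union> T = S \<union> T" using assms(3,4) by blast
  then show ?thesis using c2 by simp
qed

lemma conn_union_opt: assumes "connected_in E X" "T = {} \<or> (connected_in E T \<and> (\<exists>z. z \<in> X \<and> z \<in> T))"
  and sym: "\<forall>u v. E u v \<longrightarrow> E v u"
  shows "connected_in E (X \<union> T)"
proof (cases "T = {}")
  case True then show ?thesis using assms(1) by simp
next
  case False
  then obtain z where "z \<in> X" "z \<in> T" "connected_in E T" using assms(2) by blast
  then show ?thesis using conn_union[OF assms(1) _ _ _ sym] by blast
qed

lemma path_conn: "successively E xs \<Longrightarrow> xs \<noteq> [] \<Longrightarrow> \<forall>u v. E u v \<longrightarrow> E v u \<Longrightarrow> connected_in E (set xs)"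
proof (induction xs)
  case Nil then show ?case by simp
next
  case (Cons x xs)
  show ?case
  proof (cases xs)
    case Nil then show ?thesis using conn_single by simp
  next
    case (Cons y ys)
    then have "successively E xs" using Cons.prems(1) by simp
    then have "connected_in E (set xs)" using Cons.IH Cons.prems(3) \<open>xs = y # ys\<close> by blast
    have "E x y" using Cons.prems(1) \<open>xs = y # ys\<close> by simp
    from conn_union_edge[OF conn_single \<open>connected_in E (set xs)\<close> _ _ this Cons.prems(3)]
    have "connected_in E ({x} \<union> set xs)" using \<open>xs = y # ys\<close> by simp
    then show ?thesis by simp
  qed
qed

lemma path_exists: assumes "reach_in E T a b"
  shows "\<exists>xs. xs \<noteq> [] \<and> hd xs = a \<and> last xs = b \<and> successively E xs \<and> set xs \<subseteq> T"
proof -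
  have "(\<lambda>u v. E u v \<and> u \<in> T \<and> v \<in> T)\<^sup>*\<^sup>* a b" "a \<in> T" using assms by (auto simp: reach_in_def)
  then show ?thesis
  proof (induction rule: rtranclp_induct)
    case base then show ?case by (intro exI[of _ "[a]"]) auto
  next
    case (step y z)
    then obtain xs where xs: "xs \<noteq> [] \<and> hd xs = a \<and> last xs = y \<and> successively E xs \<and> set xs \<subseteq> T" by blast
    then show ?case using step by (intro exI[of _ "xs @ [z]"]) (auto simp: successively_append_iff)
  qed
qed

lemma path_distinct: 
  "xs \<noteq> [] \<and> hd xs = a \<and> last xs = b \<and> successively E xs \<and> set xs \<subseteq> T \<Longrightarrow>
   \<exists>ys. ys \<noteq> [] \<and> hd ys = a \<and> last ys = b \<and> successively E ys \<and> set ys \<subseteq> T \<and> distinct ys"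
proof (induction "length xs" arbitrary: xs rule: less_induct)
  case less
  show ?case
  proof (cases "distinct xs")
    case True then show ?thesis using less.prems by blast
  next
    case False
    then obtain p q r y where d: "xs = p @ [y] @ q @ [y] @ r" using not_distinct_decomp by blast
    let ?zs = "p @ [y] @ r"
    have "successively E (p @ [y])" using less.prems d
      by (simp add: successively_append_iff)
    moreover have "successively E ((p @ y # q) @ (y # r))" using less.prems d by simp
    then have "successively E (y # r)" unfolding successively_append_iff by blast
    ultimately have "successively E ?zs"
      by (auto simp: successively_append_iff)
    moreover have "hd ?zs = a" using less.prems d by (cases p) auto
    moreover have "last ?zs = b" using less.prems d by (cases r) auto
    moreover have "set ?zs \<subseteq> T" using less.prems d by auto
    ultimately show ?thesis using less.hyps[of ?zs] d by auto
  qed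
qed



lemma graph_sym: "graph V E \<Longrightarrow> \<forall>u v. E u v \<longrightarrow> E v u"
  by (simp add: graph_def)
lemma graph_in: "graph V E \<Longrightarrow> E u v \<Longrightarrow> u \<in> V \<and> v \<in> V"
  unfolding graph_def by blast
lemma graph_irr: "graph V E \<Longrightarrow> \<not> E v v"
  by (simp add: graph_def)
lemma graph_fin: "graph V E \<Longrightarrow> finite V"
  by (simp add: graph_def)

lemma nonsep_minus: "nonsep V E B \<Longrightarrow> connected_in E (B - {w})"
  unfolding nonsep_def by (cases "w \<in> B") auto

lemma nonsep_other: assumes "nonsep V E B" "finite V" obtains a where "a \<in> B" "a \<noteq> v"
proof -
  have "finite B" using assms unfolding nonsep_def using finite_subset by blast
  have "\<not> B \<subseteq> {v}"
  proof
    assume "B \<subseteq> {v}"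
    then have "card B \<le> card {v}" by (intro card_mono) auto
    then show False using assms(1) unfolding nonsep_def by simp
  qed
  then show ?thesis using that by blast
qed

lemma two_blocks:
  assumes g: "graph V E" and b1: "is_block V E B1" and b2: "is_block V E B2"
    and v1: "v \<in> B1" and v2: "v \<in> B2" and ne: "B1 \<noteq> B2"
    and rch: "\<forall>x y. x \<in> V - {v} \<longrightarrow> y \<in> V - {v} \<longrightarrow> reach_in E V x y \<longrightarrow> reach_in E (V - {v}) x y"
  shows False
proof -
  note sym = graph_sym[OF g]
  have fin: "finite V" using g by (rule graph_fin)
  have n1: "nonsep V E B1" and n2: "nonsep V E B2" using b1 b2 unfolding is_block_def by blast+
  have sub1: "B1 \<subseteq> V" and sub2: "B2 \<subseteq> V" using n1 n2 unfolding nonsep_def by blast+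
  have c1: "connected_in E B1" and c2: "connected_in E B2" using n1 n2 unfolding nonsep_def by blast+
  obtain a where a1: "a \<in> B1" "a \<noteq> v" using nonsep_other[OF n1 fin] by blast
  obtain b where b2': "b \<in> B2" "b \<noteq> v" using nonsep_other[OF n2 fin] by blast
  have "reach_in E B1 a v" using c1 a1 v1 unfolding connected_in_def by blast
  then have ra: "reach_in E V a v" using sub1 by (rule reach_mono)
  have "reach_in E B2 v b" using c2 b2' v2 unfolding connected_in_def by blast
  then have rb: "reach_in E V v b" using sub2 by (rule reach_mono)
  have "reach_in E V a b" using ra rb by (rule reach_trans)
  moreover have "a \<in> V - {v}" using a1 sub1 by blast
  moreover have "b \<in> V - {v}" using b2' sub2 by blast
  ultimately have "reach_in E (V - {v}) a b" using rch by blast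
  from path_exists[OF this] obtain P0 where "P0 \<noteq> [] \<and> hd P0 = a \<and> last P0 = b \<and> successively E P0 \<and> set P0 \<subseteq> V - {v}"
    by blast
  from path_distinct[OF this] obtain P where P: "P \<noteq> []" "hd P = a" "last P = b" "successively E P" "set P \<subseteq> V - {v}" "distinct P"
    by blast
  have cP: "connected_in E (set P)" using path_conn[OF P(4) P(1) sym] .
  have aP: "a \<in> set P" using P(1,2) hd_in_set by metis
  have bP: "b \<in> set P" using P(1,3) last_in_set by metis
  define S where "S = B1 \<union> B2 \<union> set P"
  have SV: "S \<subseteq> V" using sub1 sub2 P(5) unfolding S_def by blast
  have finS: "finite S" using SV fin finite_subset by blast
  have "card B1 \<le> card S" using finS unfolding S_def by (intro card_mono) auto
  then have cardS: "card S \<ge> 2" using n1 unfolding nonsep_def by simp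
  have c12: "connected_in E (B1 \<union> B2)" using conn_union[OF c1 c2 v1 v2 sym] .
  have "a \<in> B1 \<union> B2" using a1 by blast
  from conn_union[OF c12 cP this aP sym] have cS: "connected_in E S" unfolding S_def .
  have cSw: "connected_in E (S - {w})" if w: "w \<in> S" for w
  proof (cases "w = v")
    case True
    have "connected_in E ((B1 - {v}) \<union> set P)"
      using conn_union[OF nonsep_minus[OF n1] cP _ aP sym] a1 by blast
    then have "connected_in E ((B1 - {v}) \<union> set P \<union> (B2 - {v}))"
      using conn_union[OF _ nonsep_minus[OF n2] _ _ sym, of "(B1 - {v}) \<union> set P" b] bP b2' by blast
    moreover have "(B1 - {v}) \<union> set P \<union> (B2 - {v}) = S - {w}"
      using True P(5) unfolding S_def by blast
    ultimately show ?thesis by simp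
  next
    case False
    have cX: "connected_in E ((B1 - {w}) \<union> (B2 - {w}))"
      using conn_union[OF nonsep_minus[OF n1, of w] nonsep_minus[OF n2, of w] _ _ sym, of v] v1 v2 False by blast
    show ?thesis
    proof (cases "w \<in> set P")
      case False
      have "a \<noteq> w" using aP False by blast
      then have "connected_in E ((B1 - {w}) \<union> (B2 - {w}) \<union> set P)"
        using conn_union[OF cX cP _ aP sym] a1 by blast
      moreover have "(B1 - {w}) \<union> (B2 - {w}) \<union> set P = S - {w}"
        using False unfolding S_def by blast
      ultimately show ?thesis by simp
    next
      case True
      then obtain ys zs where Pd: "P = ys @ w # zs" by (meson split_list)
      have wys: "w \<notin> set ys" and wzs: "w \<notin> set zs" using P(6) Pd by auto
      have sP: "successively E (ys @ (w # zs))" using P(4) Pd by simp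
      have sys: "successively E ys" using sP unfolding successively_append_iff by blast
      have szs: "successively E (w # zs)" using sP unfolding successively_append_iff by blast
      then have szs': "successively E zs" by (cases zs) auto
      have oy: "set ys = {} \<or> (connected_in E (set ys) \<and> (\<exists>z. z \<in> (B1 - {w}) \<union> (B2 - {w}) \<and> z \<in> set ys))"
      proof (cases "ys = []")
        case False
        have "hd ys = a" using P(2) Pd False by simp
        then have "a \<in> set ys" using False hd_in_set by metis
        then have "a \<in> (B1 - {w}) \<union> (B2 - {w})" using wys a1 by blast
        then show ?thesis using path_conn[OF sys False sym] \<open>a \<in> set ys\<close> by blast
      qed simp
      have cY: "connected_in E ((B1 - {w}) \<union> (B2 - {w}) \<union> set ys)"
        using conn_union_opt[OF cX oy sym] .
      have oz: "set zs = {} \<or> (connected_in E (set zs) \<and> (\<exists>z. z \<in> (B1 - {w}) \<union> (B2 - {w}) \<union> set ys \<and> z \<in> set zs))"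
      proof (cases "zs = []")
        case False
        have "last zs = b" using P(3) Pd False by simp
        then have "b \<in> set zs" using False last_in_set by metis
        then have "b \<in> (B1 - {w}) \<union> (B2 - {w}) \<union> set ys" using wzs b2' by blast
        then show ?thesis using path_conn[OF szs' False sym] \<open>b \<in> set zs\<close> by blast
      qed simp
      have "connected_in E ((B1 - {w}) \<union> (B2 - {w}) \<union> set ys \<union> set zs)"
        using conn_union_opt[OF cY oz sym] .
      moreover have "(B1 - {w}) \<union> (B2 - {w}) \<union> set ys \<union> set zs = S - {w}"
        using Pd wys wzs unfolding S_def by auto
      ultimately show ?thesis by simp
    qed
  qed
  have nS: "nonsep V E S" unfolding nonsep_def using SV cardS cS cSw by blast
  have "S = B1" using b1 nS unfolding is_block_def S_def by blast
  moreover have "S = B2" using b2 nS unfolding is_block_def S_def by blast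
  ultimately show False using ne by simp
qed


lemma comps_img: "components E S = (\<lambda>x. {y. reach_in E S x y}) ` S"
  unfolding components_def by blast

lemma comp_eq: assumes sym: "\<forall>u v. E u v \<longrightarrow> E v u" and r: "reach_in E S x y"
  shows "{z. reach_in E S x z} = {z. reach_in E S y z}"
proof -
  have ry: "reach_in E S y x" using reach_sym[OF sym r] .
  show ?thesis
  proof (intro set_eqI iffI)
    fix z assume "z \<in> {z. reach_in E S x z}"
    then have "reach_in E S x z" by simp
    with ry have "reach_in E S y z" by (rule reach_trans)
    then show "z \<in> {z. reach_in E S y z}" by simp
  next
    fix z assume "z \<in> {z. reach_in E S y z}"
    then have "reach_in E S y z" by simp
    with r have "reach_in E S x z" by (rule reach_trans)
    then show "z \<in> {z. reach_in E S x z}" by simp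
  qed
qed

lemma isolated_noncut:
  assumes g: "graph V E" and vV: "v \<in> V" and iso: "\<forall>u. \<not> E v u"
  shows "\<not> cut_vertex V E v"
proof -
  note sym = graph_sym[OF g]
  have iso2: "\<not> E u v" for u using iso sym by blast
  have releq: "(\<lambda>u w. E u w \<and> u \<in> V - {v} \<and> w \<in> V - {v}) = (\<lambda>u w. E u w \<and> u \<in> V \<and> w \<in> V)"
    using iso iso2 by (intro ext) blast
  have notv: "y \<noteq> v" if "(\<lambda>u w. E u w \<and> u \<in> V \<and> w \<in> V)\<^sup>*\<^sup>* x y" "x \<noteq> v" for x y
    using that(1)
  proof (cases rule: rtranclp.cases)
    case rtrancl_refl then show ?thesis using that(2) by simp
  next
    case (rtrancl_into_rtrancl b) then show ?thesis using iso2 by blast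
  qed
  have ceq: "{y. reach_in E (V - {v}) x y} = {y. reach_in E V x y}" if "x \<in> V - {v}" for x
    using that notv unfolding reach_in_def releq by blast
  have "components E (V - {v}) \<subseteq> components E V"
    unfolding comps_img using ceq by blast
  moreover have "finite (components E V)" unfolding comps_img using graph_fin[OF g] by simp
  ultimately have "card (components E (V - {v})) \<le> card (components E V)" by (rule card_mono[rotated])
  then show ?thesis unfolding cut_vertex_def by simp
qed

lemma noncut_reach:
  assumes g: "graph V E" and vV: "v \<in> V" and nc: "\<not> cut_vertex V E v" and vu: "E v u"
  shows "\<forall>x y. x \<in> V - {v} \<longrightarrow> y \<in> V - {v} \<longrightarrow> reach_in E V x y \<longrightarrow> reach_in E (V - {v}) x y"
proof (intro allI impI)
  note sym = graph_sym[OF g]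
  have fin: "finite V" using g by (rule graph_fin)
  define C where "C = (\<lambda>x. {y. reach_in E V x y})"
  define C' where "C' = (\<lambda>x. {y. reach_in E (V - {v}) x y})"
  define F where "F = (\<lambda>K. \<Union> (C ` K))"
  have FC: "F (C' x) = C x" if x: "x \<in> V - {v}" for x
  proof -
    have "C y = C x" if "y \<in> C' x" for y
    proof -
      have "reach_in E (V - {v}) x y" using that unfolding C'_def by simp
      then have "reach_in E V x y" by (rule reach_mono) auto
      from comp_eq[OF sym this] have "C x = C y" unfolding C_def .
      then show ?thesis by (rule HOL.sym)
    qed
    moreover have "x \<in> C' x" unfolding C'_def using reach_refl[OF x] by simp
    ultimately have "\<Union> (C ` C' x) = C x" by blast
    then show ?thesis unfolding F_def by simp
  qed
  have uV: "u \<in> V" "u \<noteq> v" using graph_in[OF g vu] graph_irr[OF g, of v] vu by auto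
  have img: "F ` components E (V - {v}) = components E V"
  proof
    show "F ` components E (V - {v}) \<subseteq> components E V"
    proof
      fix K assume "K \<in> F ` components E (V - {v})"
      then obtain x where x: "x \<in> V - {v}" "K = F (C' x)" unfolding comps_img C'_def by blast
      then have "K = C x" using FC[OF x(1)] by simp
      then show "K \<in> components E V" unfolding comps_img C_def using x(1) by blast
    qed
  next
    show "components E V \<subseteq> F ` components E (V - {v})"
    proof
      fix K assume "K \<in> components E V"
      then obtain z where z: "z \<in> V" "K = C z" unfolding comps_img C_def by blast
      show "K \<in> F ` components E (V - {v})"
      proof (cases "z = v")
        case False
        then have "K = F (C' z)" using FC z by simp
        moreover have "C' z \<in> components E (V - {v})" unfolding comps_img C'_def using z False by blast
        ultimately show ?thesis by blast
      next
        case True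
        have "reach_in E V v u" using vu vV uV by (intro reach_edge)
        then have "C v = C u" unfolding C_def by (rule comp_eq[OF sym])
        then have "K = F (C' u)" using FC[of u] uV z True by simp
        moreover have "C' u \<in> components E (V - {v})" unfolding comps_img C'_def using uV by blast
        ultimately show ?thesis by blast
      qed
    qed
  qed
  have finc: "finite (components E (V - {v}))" unfolding comps_img using fin by simp
  have "card (components E (V - {v})) \<le> card (components E V)" using nc vV unfolding cut_vertex_def by simp
  moreover have "card (F ` components E (V - {v})) \<le> card (components E (V - {v}))"
    using finc by (rule card_image_le)
  ultimately have "card (F ` components E (V - {v})) = card (components E (V - {v}))"
    using img by simp
  then have inj: "inj_on F (components E (V - {v}))" using finc by (intro eq_card_imp_inj_on)
  fix x y assume x: "x \<in> V - {v}" and y: "y \<in> V - {v}" and r: "reach_in E V x y"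
  have "C x = C y" unfolding C_def using comp_eq[OF sym r] .
  then have "F (C' x) = F (C' y)" using FC x y by simp
  moreover have "C' x \<in> components E (V - {v})" "C' y \<in> components E (V - {v})"
    unfolding comps_img C'_def using x y by blast+
  ultimately have "C' x = C' y" using inj unfolding inj_on_def by blast
  moreover have "y \<in> C' y" unfolding C'_def using reach_refl[OF y] by simp
  ultimately have "y \<in> C' x" by simp
  then show "reach_in E (V - {v}) x y" unfolding C'_def by simp
qed

lemma edge_block:
  assumes g: "graph V E" and e: "E u v"
  shows "\<exists>B. is_block V E B \<and> u \<in> B \<and> v \<in> B"
proof -
  note sym = graph_sym[OF g]
  have fin: "finite V" using g by (rule graph_fin)
  have uv: "u \<in> V" "v \<in> V" "u \<noteq> v" using graph_in[OF g e] graph_irr[OF g] e by auto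
  have ns0: "nonsep V E {u, v}"
    unfolding nonsep_def
  proof (intro conjI ballI)
    show "{u, v} \<subseteq> V" using uv by simp
    show "2 \<le> card {u, v}" using uv by simp
    show "connected_in E {u, v}" using conn_edge[OF e sym] .
    fix w assume "w \<in> {u, v}"
    then have "{u, v} - {w} = {u} \<or> {u, v} - {w} = {v}" using uv by auto
    then show "connected_in E ({u, v} - {w})"
    proof
      assume "{u, v} - {w} = {u}" then show ?thesis by (simp add: conn_single)
    next
      assume "{u, v} - {w} = {v}" then show ?thesis by (simp add: conn_single)
    qed
  qed
  define N where "N = {S. nonsep V E S \<and> {u, v} \<subseteq> S}"
  have "N \<subseteq> Pow V" unfolding N_def nonsep_def by blast
  then have finN: "finite N" using fin finite_subset by blast
  have "{u, v} \<in> N" unfolding N_def using ns0 by simp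
  then have neN: "N \<noteq> {}" by blast
  have "Max (card ` N) \<in> card ` N" using finN neN by (intro Max_in) auto
  then obtain S where S: "S \<in> N" "card S = Max (card ` N)" by (metis imageE)
  have SV: "S \<subseteq> V" using S(1) unfolding N_def nonsep_def by blast
  have "is_block V E S" unfolding is_block_def
  proof (intro conjI allI impI)
    show "nonsep V E S" using S(1) unfolding N_def by simp
    fix S' assume h: "nonsep V E S' \<and> S \<subseteq> S'"
    then have "S' \<in> N" using S(1) unfolding N_def by blast
    then have "card S' \<le> Max (card ` N)" using finN by (intro Max_ge) auto
    then have le: "card S' \<le> card S" using S(2) by simp
    have finS': "finite S'" using h fin unfolding nonsep_def using finite_subset by blast
    have "card S \<le> card S'" using finS' h by (intro card_mono) auto
    then have "card S = card S'" using le by simp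
    from card_subset_eq[OF finS' _ this] h show "S' = S" by blast
  qed
  then show ?thesis using S(1) unfolding N_def by blast
qed

lemma block_nbr:
  assumes g: "graph V E" and b: "is_block V E B" and v: "v \<in> B"
  shows "\<exists>u. E v u"
proof -
  have n: "nonsep V E B" using b unfolding is_block_def by blast
  obtain a where a: "a \<in> B" "a \<noteq> v" using nonsep_other[OF n graph_fin[OF g]] by blast
  have "reach_in E B v a" using n a v unfolding nonsep_def connected_in_def by blast
  then have "(\<lambda>x y. E x y \<and> x \<in> B \<and> y \<in> B)\<^sup>*\<^sup>* v a" unfolding reach_in_def by blast
  then show ?thesis
  proof (cases rule: converse_rtranclpE)
    case base then show ?thesis using a(2) by simp
  next
    case (step y) then show ?thesis by blast
  qed
qed

lemma blocks_fin: "graph V E \<Longrightarrow> finite {B. is_block V E B}"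
proof -
  assume g: "graph V E"
  have "{B. is_block V E B} \<subseteq> Pow V" unfolding is_block_def nonsep_def by blast
  then show ?thesis using graph_fin[OF g] finite_subset by blast
qed

lemma deg_bound:
  assumes g: "graph V E" and vV: "v \<in> V"
  shows "card {u. E v u} \<le> bc_degree V E v * (max_block_size V E - 1)"
proof -
  define Bl where "Bl = {B. is_block V E B \<and> v \<in> B}"
  have finB: "finite {B. is_block V E B}" using blocks_fin[OF g] .
  have finBl: "finite Bl" unfolding Bl_def by (rule finite_subset[OF _ finB]) blast
  have fincard: "finite {card B | B. is_block V E B}"
  proof -
    have "{card B | B. is_block V E B} = card ` {B. is_block V E B}" by blast
    then show ?thesis using finB by simp
  qed
  have cb: "card B - 1 \<le> max_block_size V E - 1" if "B \<in> Bl" for B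
  proof -
    have "card B \<in> {card B | B. is_block V E B}" using that unfolding Bl_def by blast
    then have "card B \<le> max_block_size V E" unfolding max_block_size_def using fincard by (intro Max_ge)
    then show ?thesis by simp
  qed
  have sub: "{u. E v u} \<subseteq> (\<Union>B\<in>Bl. B - {v})"
  proof
    fix u assume "u \<in> {u. E v u}"
    then have e: "E v u" by simp
    then obtain B where "is_block V E B" "v \<in> B" "u \<in> B" using edge_block[OF g e] by blast
    moreover have "u \<noteq> v" using e graph_irr[OF g, of v] by auto
    ultimately show "u \<in> (\<Union>B\<in>Bl. B - {v})" unfolding Bl_def by blast
  qed
  have finU: "finite (\<Union>B\<in>Bl. B - {v})"
  proof (rule finite_subset[OF _ graph_fin[OF g]])
    show "(\<Union>B\<in>Bl. B - {v}) \<subseteq> V" unfolding Bl_def is_block_def nonsep_def by blast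
  qed
  have "card {u. E v u} \<le> card (\<Union>B\<in>Bl. B - {v})" using finU sub by (intro card_mono)
  also have "\<dots> \<le> (\<Sum>B\<in>Bl. card (B - {v}))" using finBl by (rule card_UN_le)
  also have "\<dots> \<le> (\<Sum>B\<in>Bl. max_block_size V E - 1)"
  proof (rule sum_mono)
    fix B assume B: "B \<in> Bl"
    have "card (B - {v}) = card B - 1" using B unfolding Bl_def by simp
    then show "card (B - {v}) \<le> max_block_size V E - 1" using cb[OF B] by simp
  qed
  also have "\<dots> = card Bl * (max_block_size V E - 1)" by simp
  finally show ?thesis unfolding bc_degree_def Bl_def by simp
qed

lemma bc_le_max:
  assumes g: "graph V E" and vV: "v \<in> V" and ex: "\<exists>v. cut_vertex V E v"
  shows "bc_degree V E v \<le> max_cut_bc_degree V E"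
proof -
  have finD: "finite {bc_degree V E v | v. cut_vertex V E v}"
  proof (rule finite_subset)
    show "{bc_degree V E v | v. cut_vertex V E v} \<subseteq> bc_degree V E ` V" unfolding cut_vertex_def by blast
    show "finite (bc_degree V E ` V)" using graph_fin[OF g] by simp
  qed
  have finBl: "finite {B. is_block V E B \<and> w \<in> B}" for w
    by (rule finite_subset[OF _ blocks_fin[OF g]]) blast
  have pos: "1 \<le> max_cut_bc_degree V E"
  proof -
    obtain v0 where cv: "cut_vertex V E v0" using ex by blast
    then have v0V: "v0 \<in> V" unfolding cut_vertex_def by simp
    have "\<exists>u. E v0 u" using isolated_noncut[OF g v0V] cv by blast
    then obtain u where "E v0 u" by blast
    then obtain B where "is_block V E B" "v0 \<in> B" using edge_block[OF g] by blast
    then have "{B. is_block V E B \<and> v0 \<in> B} \<noteq> {}" by blast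
    then have "1 \<le> bc_degree V E v0" unfolding bc_degree_def using finBl[of v0]
      by (simp add: Suc_le_eq card_gt_0_iff)
    also have "bc_degree V E v0 \<le> max_cut_bc_degree V E" unfolding max_cut_bc_degree_def
      using finD cv by (intro Max_ge) blast+
    finally show ?thesis .
  qed
  show ?thesis
  proof (cases "cut_vertex V E v")
    case True
    then show ?thesis unfolding max_cut_bc_degree_def using finD by (intro Max_ge) blast+
  next
    case False
    have "bc_degree V E v \<le> 1"
    proof (cases "{B. is_block V E B \<and> v \<in> B} = {}")
      case True then show ?thesis unfolding bc_degree_def True by simp
    next
      case ne: False
      then obtain B0 where "is_block V E B0" "v \<in> B0" by blast
      then obtain u where vu: "E v u" using block_nbr[OF g] by blast
      have rch: "\<forall>x y. x \<in> V - {v} \<longrightarrow> y \<in> V - {v} \<longrightarrow> reach_in E V x y \<longrightarrow> reach_in E (V - {v}) x y"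
        using noncut_reach[OF g vV False vu] .
      have "\<forall>B1\<in>{B. is_block V E B \<and> v \<in> B}. \<forall>B2\<in>{B. is_block V E B \<and> v \<in> B}. B1 = B2"
      proof (intro ballI)
        fix B1 B2 assume "B1 \<in> {B. is_block V E B \<and> v \<in> B}" "B2 \<in> {B. is_block V E B \<and> v \<in> B}"
        then show "B1 = B2" using two_blocks[OF g _ _ _ _ _ rch, of B1 B2] by blast
      qed
      then show ?thesis unfolding bc_degree_def using card_le_Suc0_iff_eq[OF finBl[of v]] by simp
    qed
    then show ?thesis using pos by simp
  qed
qed

lemma grundy_le:
  assumes g: "graph V E" and gc: "grundy_coloring V E c k" and ex: "\<exists>v. cut_vertex V E v"
  shows "k \<le> (max_block_size V E - 1) * max_cut_bc_degree V E + 1"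
proof (cases "k = 0")
  case True then show ?thesis by simp
next
  case False
  then obtain w where w: "w \<in> V" "c w = k" using gc unfolding grundy_coloring_def by force
  define N where "N = {u. E w u}"
  have finN: "finite N" unfolding N_def using graph_in[OF g] graph_fin[OF g]
    by (metis (no_types, lifting) finite_subset mem_Collect_eq subsetI)
  have "{1..<k} \<subseteq> c ` N"
  proof
    fix i assume "i \<in> {1..<k}"
    then have i: "1 \<le> i" "i < c w" using w by auto
    have G4: "\<forall>v\<in>V. \<forall>i. 1 \<le> i \<and> i < c v \<longrightarrow> (\<exists>u\<in>V. E v u \<and> c u = i)"
      using gc unfolding grundy_coloring_def by blast
    then have "\<exists>u\<in>V. E w u \<and> c u = i" using w(1) i by blast
    then obtain u where "u \<in> V" "E w u" "c u = i" by blast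
    then show "i \<in> c ` N" unfolding N_def by blast
  qed
  then have "card {1..<k} \<le> card (c ` N)" using finN by (intro card_mono) auto
  also have "\<dots> \<le> card N" using finN by (rule card_image_le)
  also have "\<dots> \<le> bc_degree V E w * (max_block_size V E - 1)" unfolding N_def by (rule deg_bound[OF g w(1)])
  also have "\<dots> \<le> max_cut_bc_degree V E * (max_block_size V E - 1)"
    using bc_le_max[OF g w(1) ex] by (rule mult_right_mono) simp
  finally show ?thesis by (simp add: mult.commute)
qed

lemma grundy_exists:
  assumes g: "graph V E" and ne: "V \<noteq> {}"
  shows "\<exists>c k. grundy_coloring V E c k"
proof -
  have fin: "finite V" using g by (rule graph_fin)
  obtain f :: "'a \<Rightarrow> nat" and n where f: "f ` V = {i. i < n}" "inj_on f V"
    using finite_imp_inj_to_nat_seg[OF fin] by blast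
  define P where "P = (\<lambda>c::'a \<Rightarrow> nat. (\<forall>x\<in>V. 1 \<le> c x) \<and> (\<forall>x\<in>V. \<forall>y\<in>V. E x y \<longrightarrow> c x \<noteq> c y))"
  have "P (\<lambda>x. Suc (f x))" unfolding P_def
  proof (intro conjI ballI impI)
    fix x y assume "x \<in> V" "y \<in> V" "E x y"
    then have "x \<noteq> y" using graph_irr[OF g, of x] by auto
    then show "Suc (f x) \<noteq> Suc (f y)" using f(2) \<open>x \<in> V\<close> \<open>y \<in> V\<close> unfolding inj_on_def by auto
  qed simp
  from ex_has_least_nat[of P, OF this, of "\<lambda>c. \<Sum>x\<in>V. c x"]
  obtain c where Pc: "P c" and minc: "\<And>c'. P c' \<Longrightarrow> (\<Sum>x\<in>V. c x) \<le> (\<Sum>x\<in>V. c' x)" by blast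
  have gr: "\<exists>u\<in>V. E x u \<and> c u = i" if x: "x \<in> V" and i: "1 \<le> i" "i < c x" for x i
  proof (rule ccontr)
    assume nb: "\<not> (\<exists>u\<in>V. E x u \<and> c u = i)"
    define c' where "c' = c(x := i)"
    have "P c'" unfolding P_def
    proof (intro conjI ballI impI)
      fix y assume "y \<in> V" then show "1 \<le> c' y" using Pc i unfolding P_def c'_def by simp
    next
      fix y z assume y: "y \<in> V" and z: "z \<in> V" and e: "E y z"
      have yz: "y \<noteq> z" using e graph_irr[OF g, of y] by auto
      have ezy: "E z y" using e graph_sym[OF g] by blast
      show "c' y \<noteq> c' z"
      proof (cases "y = x")
        case True
        then show ?thesis using nb z e yz unfolding c'_def by auto
      next
        case yx: False
        show ?thesis
        proof (cases "z = x")
          case True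
          then show ?thesis using nb y ezy yx unfolding c'_def by auto
        next
          case False
          then show ?thesis using yx Pc y z e unfolding c'_def P_def by simp
        qed
      qed
    qed
    have "(\<Sum>y\<in>V. c' y) < (\<Sum>y\<in>V. c y)"
    proof (rule sum_strict_mono_ex1[OF fin])
      show "\<forall>y\<in>V. c' y \<le> c y" unfolding c'_def using i by simp
      show "\<exists>a\<in>V. c' a < c a" unfolding c'_def using i x by (intro bexI[of _ x]) auto
    qed
    with minc[OF \<open>P c'\<close>] show False by simp
  qed
  define k where "k = Max (c ` V)"
  have finc: "finite (c ` V)" using fin by simp
  have "k \<in> c ` V" unfolding k_def using finc ne by (intro Max_in) auto
  then obtain w where w: "w \<in> V" "c w = k" by blast
  have "grundy_coloring V E c k" unfolding grundy_coloring_def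
  proof (intro conjI)
    show "\<forall>v\<in>V. c v \<in> {1..k}"
    proof
      fix v assume v: "v \<in> V"
      have "c v \<le> k" unfolding k_def using finc v by (intro Max_ge) auto
      moreover have "1 \<le> c v" using Pc v unfolding P_def by blast
      ultimately show "c v \<in> {1..k}" by simp
    qed
    show "\<forall>u\<in>V. \<forall>v\<in>V. E u v \<longrightarrow> c u \<noteq> c v" using Pc unfolding P_def by blast
    show "\<forall>i\<in>{1..k}. \<exists>v\<in>V. c v = i"
    proof
      fix i assume i: "i \<in> {1..k}"
      show "\<exists>v\<in>V. c v = i"
      proof (cases "i = k")
        case True then show ?thesis using w by blast
      next
        case False
        then have "i < c w" using i w by simp
        then show ?thesis using gr[OF w(1)] i by auto
      qed
    qed
    show "\<forall>v\<in>V. \<forall>i. 1 \<le> i \<and> i < c v \<longrightarrow> (\<exists>u\<in>V. E v u \<and> c u = i)"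
      using gr by blast
  qed
  then show ?thesis by blast
qed

theorem corollary1:
  fixes V :: "'a set" and E :: "'a \<Rightarrow> 'a \<Rightarrow> bool"
  assumes "graph V E"
    and "\<exists>v. cut_vertex V E v"
  shows "grundy_number V E \<le> (max_block_size V E - 1) * max_cut_bc_degree V E + 1"
proof -
  define bd where "bd = (max_block_size V E - 1) * max_cut_bc_degree V E + 1"
  define K where "K = {k. \<exists>c. grundy_coloring V E c k}"
  have le: "\<forall>k\<in>K. k \<le> bd" unfolding K_def bd_def using grundy_le[OF assms(1) _ assms(2)] by blast
  have finK: "finite K" using le by (intro finite_subset[of K "{..bd}"]) auto
  have "V \<noteq> {}" using assms(2) unfolding cut_vertex_def by blast
  then have "K \<noteq> {}" unfolding K_def using grundy_exists[OF assms(1)] by blast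
  then have "Max K \<le> bd" using finK le by simp
  then show ?thesis unfolding grundy_number_def K_def bd_def .
qed

end
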